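(* Let $\theta\in\mathbb{R}\setminus\pi\mathbb{Q}$, $\mu\in\mathbb{C}\setminus\{0,1\}$ and $a,b\in\mathbb{C}^n$ with $a\neq b$. If $G$ is the group generated by $f=(a,e^{i\theta})$ and $g=(b,\mu)$, then $\overline{G(a)}=\mathbb{C}(b-a)+a=\{a+t(b-a):t\in\mathbb{C}\}$.
   Context: For $c\in\mathbb{C}^n$ and $\nu\in\mathbb{C}\setminus\{0,1\}$, $(c,\nu)$ denotes the map $z\mapsto\nu(z-c)+c$ of $\mathbb{C}^n$. $G(z)=\{h(z):h\in G\}$. *)

theory Defs
  imports "HOL-Analysis.Analysis"
begin

text \<open>The map (c,nu) of C^n: z maps to nu(z - c) + c.\<close>
definition homothety :: "complex^'n \<Rightarrow> complex \<Rightarrow> (complex^'n \<Rightarrow> complex^'n)" where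
  "homothety c \<nu> = (\<lambda>z. \<nu> *s (z - c) + c)"

inductive_set gen_group :: "('a \<Rightarrow> 'a) set \<Rightarrow> ('a \<Rightarrow> 'a) set" for S where
  gen_id: "id \<in> gen_group S"
| gen_comp: "s \<in> S \<Longrightarrow> h \<in> gen_group S \<Longrightarrow> s \<circ> h \<in> gen_group S"
| gen_comp_inv: "s \<in> S \<Longrightarrow> h \<in> gen_group S \<Longrightarrow> inv s \<circ> h \<in> gen_group S"

definition orbit :: "('a \<Rightarrow> 'a) set \<Rightarrow> 'a \<Rightarrow> 'a set" where
  "orbit G z = {h z | h. h \<in> G}"

end

theory Submission
  imports Defs
begin

lemma exp_i_minus_1_le: "cmod (exp (\<i> * complex_of_real s) - 1) \<le> \<bar>s\<bar>"
  using dist_exp_i_1[of s] abs_sin_x_le_abs_x[of "s/2"] by simp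

lemma rot_dense:
  fixes \<theta> \<phi> \<delta> :: real
  assumes th: "\<forall>q\<in>\<rat>. \<theta> \<noteq> pi * q" and d: "\<delta> > 0"
  shows "\<exists>k::nat. cmod (exp (\<i> * complex_of_real \<theta>) ^ k - exp (\<i> * complex_of_real \<phi>)) < \<delta>"
proof -
  define x where "x = \<theta> / (2*pi)"
  have xq: "x \<notin> \<rat>"
  proof
    assume "x \<in> \<rat>"
    then have "2*x \<in> \<rat>" by simp
    moreover have "\<theta> = pi * (2*x)" by (simp add: x_def)
    ultimately show False using th by blast
  qed
  have "\<delta>/(2*pi) > 0" using d by simp
  then obtain h k :: int where k: "k > 0" and hk: "\<bar>of_int k * x - of_int h - \<phi>/(2*pi)\<bar> < \<delta>/(2*pi)"
    using sequence_of_fractional_parts_is_dense[OF xq] by metis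
  define s where "s = of_int k * \<theta> - 2*pi* of_int h - \<phi>"
  have s_eq: "s = 2*pi*(of_int k * x - of_int h - \<phi>/(2*pi))"
    by (simp add: s_def x_def field_simps)
  have sabs: "\<bar>s\<bar> < \<delta>"
  proof -
    have "\<bar>s\<bar> = 2*pi*\<bar>of_int k * x - of_int h - \<phi>/(2*pi)\<bar>" by (simp add: s_eq abs_mult)
    also have "\<dots> < 2*pi*(\<delta>/(2*pi))" using hk by (intro mult_strict_left_mono) auto
    finally show ?thesis by simp
  qed
  have "exp (\<i> * complex_of_real \<theta>) ^ nat k = exp (of_nat (nat k) * (\<i> * complex_of_real \<theta>))"
    by (simp add: exp_of_nat_mult)
  also have "of_nat (nat k) * (\<i> * complex_of_real \<theta>) = \<i> * complex_of_real \<phi> + \<i> * complex_of_real s + of_int h * (2 * pi * \<i>)"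
    using k by (simp add: s_def field_simps)
  also have "exp \<dots> = exp (\<i> * complex_of_real \<phi>) * exp (\<i> * complex_of_real s)"
    by (simp add: exp_add exp_eq_1)
  finally have eq: "exp (\<i> * complex_of_real \<theta>) ^ nat k = exp (\<i> * complex_of_real \<phi>) * exp (\<i> * complex_of_real s)" .
  have "cmod (exp (\<i> * complex_of_real \<theta>) ^ nat k - exp (\<i> * complex_of_real \<phi>))
      = cmod (exp (\<i> * complex_of_real \<phi>) * (exp (\<i> * complex_of_real s) - 1))"
    by (simp add: eq algebra_simps)
  also have "\<dots> = cmod (exp (\<i> * complex_of_real s) - 1)"
    by (simp add: norm_mult)
  also have "\<dots> < \<delta>" using exp_i_minus_1_le[of s] sabs by linarith
  finally show ?thesis by blast
qed

lemma two_units: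
  fixes w :: complex
  assumes "cmod w \<le> 2"
  shows "\<exists>\<phi>1 \<phi>2::real. w = exp (\<i> * complex_of_real \<phi>1) + exp (\<i> * complex_of_real \<phi>2)"
proof (cases "w = 0")
  case True
  then show ?thesis
    by (rule_tac x=0 in exI, rule_tac x=pi in exI) simp
next
  case False
  define \<alpha> where "\<alpha> = Arg w"
  define \<beta> where "\<beta> = arccos (cmod w / 2)"
  have w1: "-1 \<le> cmod w / 2" using norm_ge_zero[of w] by linarith
  have w2: "cmod w / 2 \<le> 1" using assms by simp
  have cb: "cos \<beta> = cmod w / 2" unfolding \<beta>_def using cos_arccos[OF w1 w2] .
  have "exp (\<i> * complex_of_real (\<alpha>+\<beta>)) + exp (\<i> * complex_of_real (\<alpha>-\<beta>))
      = exp (\<i> * complex_of_real \<alpha>) * (exp (\<i> * complex_of_real \<beta>) + exp (-(\<i> * complex_of_real \<beta>)))"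
    by (simp add: algebra_simps exp_add exp_diff flip: exp_add)
  also have "exp (\<i> * complex_of_real \<beta>) + exp (-(\<i> * complex_of_real \<beta>)) = 2 * cos (complex_of_real \<beta>)"
    by (simp add: cos_exp_eq)
  also have "cos (complex_of_real \<beta>) = complex_of_real (cmod w / 2)"
    by (metis cos_of_real cb)
  also have "exp (\<i> * complex_of_real \<alpha>) * (2 * complex_of_real (cmod w / 2)) = w"
    using Arg_eq[OF False] by (simp add: \<alpha>_def mult.commute)
  finally show ?thesis by metis
qed


lemma omega_ne1:
  assumes th: "\<forall>q\<in>\<rat>. \<theta> \<noteq> pi * q"
  shows "exp (\<i> * complex_of_real \<theta>) \<noteq> 1"
proof
  assume "exp (\<i> * complex_of_real \<theta>) = 1"
  then obtain n :: int where "\<theta> = of_int (2*n) * pi" by (auto simp: exp_eq_1)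
  then have "\<theta> = pi * of_int (2*n)" by simp
  moreover have "(of_int (2*n) :: real) \<in> \<rat>" by simp
  ultimately show False using th by blast
qed

lemma dense_O:
  fixes \<omega> \<mu> :: complex and Os :: "complex set"
  assumes th: "\<forall>q\<in>\<rat>. \<theta> \<noteq> pi * q" and om: "\<omega> = exp (\<i> * complex_of_real \<theta>)"
    and mu0: "\<mu> \<noteq> 0" and mu1: "\<mu> \<noteq> 1" and O0: "0 \<in> Os"
    and F: "\<And>t. t \<in> Os \<Longrightarrow> \<omega> * t \<in> Os" and Fi: "\<And>t. t \<in> Os \<Longrightarrow> t / \<omega> \<in> Os"
    and G: "\<And>t. t \<in> Os \<Longrightarrow> \<mu> * (t - 1) + 1 \<in> Os" and Gi: "\<And>t. t \<in> Os \<Longrightarrow> (t - 1) / \<mu> + 1 \<in> Os"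
  shows "\<forall>z e. e > 0 \<longrightarrow> (\<exists>t\<in>Os. cmod (t - z) < e)"
proof (intro allI impI)
  fix z :: complex and e :: real assume e: "e > 0"
  have w0: "\<omega> \<noteq> 0" using om by simp
  have w1: "\<omega> \<noteq> 1" using om omega_ne1[OF th] by simp
  have Fk: "\<omega>^k * t \<in> Os" if "t \<in> Os" for k t
    using that by (induction k arbitrary: t) (auto simp: mult.assoc dest: F)
  have Fik: "t / \<omega>^k \<in> Os" if "t \<in> Os" for k t
    using that proof (induction k arbitrary: t)
    case (Suc k) then have "t / \<omega>^k / \<omega> \<in> Os" using Fi by blast
    then show ?case by (simp add: field_simps)
  qed simp
  define c where "c = 1 - \<mu>"
  define L where "L = {v. \<forall>t\<in>Os. t + v \<in> Os}"
  have L_O: "v \<in> L \<Longrightarrow> v \<in> Os" for v using O0 by (auto simp: L_def)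
  have L_add: "v \<in> L \<Longrightarrow> u \<in> L \<Longrightarrow> v + u \<in> L" for u v
    by (auto simp: L_def add.assoc[symmetric])
  have L_0: "0 \<in> L" by (auto simp: L_def)
  have L_nat: "of_nat n * v \<in> L" if "v \<in> L" for n v
    by (induction n) (auto simp: L_0 L_add that algebra_simps)
  have L_rot: "\<omega>^j * v \<in> L" if "v \<in> L" for j v
  proof -
    { fix t assume "t \<in> Os"
      then have "t / \<omega>^j + v \<in> Os" using Fik that by (auto simp: L_def)
      then have "\<omega>^j * (t / \<omega>^j + v) \<in> Os" using Fk by blast
      moreover have "\<omega>^j * (t / \<omega>^j + v) = t + \<omega>^j * v" using w0 by (simp add: field_simps)
      ultimately have "t + \<omega>^j * v \<in> Os" by simp }
    then show ?thesis by (auto simp: L_def)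
  qed
  have Tp: "(\<omega>^k - 1) * c \<in> L" for k
  proof -
    { fix t assume t: "t \<in> Os"
      define s1 where "s1 = (t - 1) / \<mu> + 1"
      have "s1 \<in> Os" using Gi t by (simp add: s1_def)
      then have "\<omega>^k * (\<mu> * (s1 / \<omega>^k - 1) + 1) \<in> Os" using Fik G Fk by blast
      moreover have "\<omega>^k * (\<mu> * (s1 / \<omega>^k - 1) + 1) = t + (\<omega>^k - 1) * c"
        using w0 mu0 by (simp add: s1_def c_def field_simps)
      ultimately have "t + (\<omega>^k - 1) * c \<in> Os" by simp }
    then show ?thesis by (auto simp: L_def)
  qed
  have Tm: "- ((\<omega>^k - 1) * c) \<in> L" for k
  proof -
    { fix t assume t: "t \<in> Os"
      have "\<omega>^k * ((t / \<omega>^k - 1) / \<mu> + 1) \<in> Os" using Fik Gi Fk t by blast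
      then have "\<mu> * (\<omega>^k * ((t / \<omega>^k - 1) / \<mu> + 1) - 1) + 1 \<in> Os" using G by blast
      moreover have "\<mu> * (\<omega>^k * ((t / \<omega>^k - 1) / \<mu> + 1) - 1) + 1 = t + - ((\<omega>^k - 1) * c)"
        using w0 mu0 by (simp add: c_def field_simps)
      ultimately have "t + - ((\<omega>^k - 1) * c) \<in> Os" by simp }
    then show ?thesis by (auto simp: L_def)
  qed
  define d where "d = (\<omega> - 1) * c"
  have d0: "d \<noteq> 0" using w1 mu1 by (simp add: d_def c_def)
  have dL: "\<omega>^j * d \<in> L" for j using L_rot[OF Tp[of 1]] by (simp add: d_def)
  define r where "r = cmod d"
  have r0: "r > 0" using d0 by (simp add: r_def)
  obtain n :: nat where n: "cmod z / (2*r) < of_nat n" using reals_Archimedean2 by blast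
  have n0: "n > 0" using n r0 by (cases n) (auto simp: divide_less_0_iff)
  define w where "w = z / (of_nat n * d)"
  have "cmod w = cmod z / (of_nat n * r)" by (simp add: w_def r_def norm_divide norm_mult)
  also have "\<dots> \<le> 2" using n r0 n0 by (simp add: field_simps)
  finally obtain \<phi>1 \<phi>2 where w: "w = exp (\<i> * complex_of_real \<phi>1) + exp (\<i> * complex_of_real \<phi>2)"
    using two_units by blast
  define \<delta> where "\<delta> = e / (2 * of_nat n * r)"
  have \<delta>: "\<delta> > 0" using e r0 n0 by (simp add: \<delta>_def)
  obtain k1 :: nat where k1: "cmod (\<omega>^k1 - exp (\<i> * complex_of_real \<phi>1)) < \<delta>"
    using rot_dense[OF th \<delta>] om by blast
  obtain k2 :: nat where k2: "cmod (\<omega>^k2 - exp (\<i> * complex_of_real \<phi>2)) < \<delta>"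
    using rot_dense[OF th \<delta>] om by blast
  define t where "t = of_nat n * (\<omega>^k1 * d + \<omega>^k2 * d)"
  have "t \<in> Os" unfolding t_def by (intro L_O L_nat L_add dL)
  moreover have "cmod (t - z) < e"
  proof -
    have zz: "z = of_nat n * d * w" using n0 d0 by (simp add: w_def)
    have "t - z = (of_nat n * d) * ((\<omega>^k1 - exp (\<i> * complex_of_real \<phi>1)) + (\<omega>^k2 - exp (\<i> * complex_of_real \<phi>2)))"
      by (simp add: t_def zz w algebra_simps)
    then have "cmod (t - z) = of_nat n * r * cmod ((\<omega>^k1 - exp (\<i> * complex_of_real \<phi>1)) + (\<omega>^k2 - exp (\<i> * complex_of_real \<phi>2)))"
      by (simp add: norm_mult r_def)
    also have "\<dots> \<le> of_nat n * r * (cmod (\<omega>^k1 - exp (\<i> * complex_of_real \<phi>1)) + cmod (\<omega>^k2 - exp (\<i> * complex_of_real \<phi>2)))"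
      using r0 by (intro mult_left_mono norm_triangle_ineq) auto
    also have "\<dots> < of_nat n * r * (\<delta> + \<delta>)"
      using r0 n0 k1 k2 by (intro mult_strict_left_mono) auto
    also have "\<dots> = e" using r0 n0 by (simp add: \<delta>_def field_simps)
    finally show ?thesis .
  qed
  ultimately show "\<exists>t\<in>Os. cmod (t - z) < e" by blast
qed


lemma inv_homothety:
  fixes c :: "complex^'n"
  assumes "\<nu> \<noteq> 0"
  shows "inv (homothety c \<nu>) = homothety c (inverse \<nu>)"
  by (rule inv_equality) (use assms in \<open>simp_all add: homothety_def vec_eq_iff field_simps\<close>)

lemma hom_a: "homothety a \<nu> (a + t *s (b - a)) = a + (\<nu> * t) *s (b - a)"
  by (simp add: homothety_def vec_eq_iff algebra_simps)

lemma hom_b: "homothety b \<nu> (a + t *s (b - a)) = a + (\<nu> * (t - 1) + 1) *s (b - a)"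
  by (simp add: homothety_def vec_eq_iff algebra_simps)


theorem proposition3p2:
  fixes \<theta> :: real and \<mu> :: complex and a b :: "complex^'n"
  assumes "\<forall>q\<in>\<rat>. \<theta> \<noteq> pi * q"
    and "\<mu> \<noteq> 0" and "\<mu> \<noteq> 1"
    and "a \<noteq> b"
  shows "closure (orbit (gen_group {homothety a (exp (\<i> * complex_of_real \<theta>)), homothety b \<mu>}) a)
           = {a + t *s (b - a) | t. True}"
  (is "closure (orbit ?G a) = ?L")
proof -
  define \<omega> where "\<omega> = exp (\<i> * complex_of_real \<theta>)"
  define \<phi> where "\<phi> = (\<lambda>t::complex. a + t *s (b - a))"
  have w0: "\<omega> \<noteq> 0" by (simp add: \<omega>_def)
  have invA: "inv (homothety a \<omega>) = homothety a (inverse \<omega>)" using w0 by (rule inv_homothety)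
  have invB: "inv (homothety b \<mu>) = homothety b (inverse \<mu>)" using assms(2) by (rule inv_homothety)
  have hA: "homothety a \<nu> (\<phi> t) = \<phi> (\<nu> * t)" for \<nu> t unfolding \<phi>_def by (rule hom_a)
  have hB: "homothety b \<nu> (\<phi> t) = \<phi> (\<nu> * (t - 1) + 1)" for \<nu> t unfolding \<phi>_def by (rule hom_b)
  have line: "\<forall>t. \<exists>t'. h (\<phi> t) = \<phi> t'" if "h \<in> ?G" for h
    using that
  proof (induction rule: gen_group.induct)
    case gen_id then show ?case by auto
  next
    case (gen_comp s h)
    show ?case
    proof
      fix t obtain t' where "h (\<phi> t) = \<phi> t'" using gen_comp by blast
      then show "\<exists>t'. (s \<circ> h) (\<phi> t) = \<phi> t'"
        using gen_comp(1) by (auto simp: hA hB)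
    qed
  next
    case (gen_comp_inv s h)
    show ?case
    proof
      fix t obtain t' where "h (\<phi> t) = \<phi> t'" using gen_comp_inv by blast
      then show "\<exists>t'. (inv s \<circ> h) (\<phi> t) = \<phi> t'"
        using gen_comp_inv(1) invA invB by (auto simp: hA hB simp flip: \<omega>_def)
    qed
  qed
  have Leq: "?L = range \<phi>" by (auto simp: \<phi>_def)
  have phi0: "\<phi> 0 = a" by (simp add: \<phi>_def)
  have sub1: "orbit ?G a \<subseteq> ?L"
  proof
    fix x assume "x \<in> orbit ?G a"
    then obtain h where h: "h \<in> ?G" "x = h a" by (auto simp: orbit_def)
    then obtain t' where "h (\<phi> 0) = \<phi> t'" using line by blast
    then show "x \<in> ?L" using h phi0 Leq by auto
  qed
  have lin: "linear (\<lambda>t::complex. t *s (b - a))"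
    by (rule linearI) (simp_all add: vec_eq_iff algebra_simps)
  have inj: "inj (\<lambda>t::complex. t *s (b - a))"
  proof (rule injI)
    fix x y assume xy: "x *s (b - a) = y *s (b - a)"
    obtain i where i: "(b - a) $ i \<noteq> 0" using assms(4) by (metis vec_eq_iff zero_index right_minus_eq)
    from xy have "(x *s (b - a)) $ i = (y *s (b - a)) $ i" by simp
    then have "x * (b - a) $ i = y * (b - a) $ i" by (simp only: vector_smult_component)
    then show "x = y" using i by simp
  qed
  have "closed (range (\<lambda>t::complex. t *s (b - a)))"
    using closed_injective_linear_image[OF closed_UNIV lin inj] .
  then have "closed ((+) a ` range (\<lambda>t::complex. t *s (b - a)))" by (rule closed_translation)
  moreover have "(+) a ` range (\<lambda>t::complex. t *s (b - a)) = ?L" by auto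
  ultimately have clL: "closed ?L" by simp
  have A: "closure (orbit ?G a) \<subseteq> ?L" using sub1 clL by (rule closure_minimal)
  define Os where "Os = {t. \<phi> t \<in> orbit ?G a}"
  have memO: "t \<in> Os \<longleftrightarrow> (\<exists>h\<in>?G. h a = \<phi> t)" for t by (auto simp: Os_def orbit_def) (metis)
  have sA: "homothety a \<omega> \<in> {homothety a (exp (\<i> * complex_of_real \<theta>)), homothety b \<mu>}" by (simp add: \<omega>_def)
  have sB: "homothety b \<mu> \<in> {homothety a (exp (\<i> * complex_of_real \<theta>)), homothety b \<mu>}" by simp
  have dense: "\<forall>z e. e > 0 \<longrightarrow> (\<exists>t\<in>Os. cmod (t - z) < e)"
  proof (rule dense_O[OF assms(1) \<omega>_def assms(2,3)])
    show "0 \<in> Os" using memO[of 0] phi0 gen_group.gen_id by force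
  next
    fix t assume "t \<in> Os"
    then obtain h where h: "h \<in> ?G" "h a = \<phi> t" using memO by blast
    have "homothety a \<omega> \<circ> h \<in> ?G" using gen_group.gen_comp[OF sA] h(1) by simp
    moreover have "(homothety a \<omega> \<circ> h) a = \<phi> (\<omega> * t)" using h by (simp add: hA)
    ultimately show "\<omega> * t \<in> Os" using memO by blast
  next
    fix t assume "t \<in> Os"
    then obtain h where h: "h \<in> ?G" "h a = \<phi> t" using memO by blast
    have "inv (homothety a \<omega>) \<circ> h \<in> ?G" using gen_group.gen_comp_inv[OF sA] h(1) by simp
    moreover have "(inv (homothety a \<omega>) \<circ> h) a = \<phi> (t / \<omega>)" using h by (simp add: hA invA divide_inverse mult.commute)
    ultimately show "t / \<omega> \<in> Os" using memO by blast
  next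
    fix t assume "t \<in> Os"
    then obtain h where h: "h \<in> ?G" "h a = \<phi> t" using memO by blast
    have "homothety b \<mu> \<circ> h \<in> ?G" using gen_group.gen_comp[OF sB] h(1) by simp
    moreover have "(homothety b \<mu> \<circ> h) a = \<phi> (\<mu> * (t - 1) + 1)" using h by (simp add: hB)
    ultimately show "\<mu> * (t - 1) + 1 \<in> Os" using memO by blast
  next
    fix t assume "t \<in> Os"
    then obtain h where h: "h \<in> ?G" "h a = \<phi> t" using memO by blast
    have "inv (homothety b \<mu>) \<circ> h \<in> ?G" using gen_group.gen_comp_inv[OF sB] h(1) by simp
    moreover have "(inv (homothety b \<mu>) \<circ> h) a = \<phi> ((t - 1) / \<mu> + 1)" using h by (simp add: hB invB divide_inverse mult.commute)
    ultimately show "(t - 1) / \<mu> + 1 \<in> Os" using memO by blast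
  qed
  have clO: "closure Os = UNIV"
  proof -
    { fix z :: complex
      have "z \<in> closure Os" unfolding closure_approachable
        using dense by (auto simp: dist_norm) }
    then show ?thesis by auto
  qed
  have phic: "\<phi> = (\<lambda>t. \<chi> i. a $ i + t * (b - a) $ i)" by (simp add: \<phi>_def fun_eq_iff vec_eq_iff algebra_simps)
  have cont: "continuous_on (closure Os) \<phi>" unfolding phic by (intro continuous_intros)
  have "\<phi> ` closure Os \<subseteq> closure (orbit ?G a)"
    by (rule image_closure_subset[OF cont closed_closure]) (auto simp: Os_def intro: closure_subset[THEN subsetD])
  then have B: "?L \<subseteq> closure (orbit ?G a)" using clO Leq by simp
  show ?thesis using A B by blast
qed

end
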